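(* Let $\mathbb{X}\subseteq\mathbb{R}^n$, let $\mathbb{Y}$ be a finite set of classes with $|\mathbb{Y}|\ge 2$, and let $D$ be a distribution on $\mathbb{X}\times\mathbb{Y}$ with joint density $p(\bm{x},k)$, marginal $p(\bm{x})=\sum_k p(\bm{x},k)$ and posterior $p(\mathrm{y}=k\mid\mathbf{x}=\bm{x})=p(\bm{x},k)/p(\bm{x})$. Fix a distance $d$ on $\mathbb{X}$ and $\epsilon>0$, and let $\mathbb{V}_{\bm{x}}=\{\bm{x'}: d(\bm{x},\bm{x'})\le\epsilon\}$. For a classifier $h:\mathbb{X}\to\mathbb{Y}$, $\operatorname{Rob}(h,\bm{x},y;\mathbb{V}_{\bm{x}})$ holds iff (i) no $\bm{x'}$ with $d(\bm{x},\bm{x'})\le\epsilon$ has $h(\bm{x'})\ne y$, and (ii) no $(\bm{x'},y')$ with $p(\bm{x'},y')>0$ and $d(\bm{x},\bm{x'})\le\epsilon$ has $h(\bm{x'})\neq y'$. Let $\zeta^\sharp_D=\inf_{h\text{ measurable}}\mathbb{E}_{(\mathbf{x},\mathrm{y})\sim D}[1-\mathbf{1}_{\operatorname{Rob}(h,\mathbf{x},\mathrm{y};\mathbb{V}_{\mathbf{x}})}]$ and let $\beta_D=\int(1-\max_k p(\mathrm{y}=k\mid\mathbf{x}=\bm{x}))\,p(\bm{x})\,d\bm{x}$ be the Bayes error. Then $$\zeta^\sharp_D\ \ge\ \frac{|\mathbb{Y}|}{|\mathbb{Y}|-1}\,\beta_D.$$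
   Context: $\zeta^\sharp_D$ is called the irreducible robustness error of $D$; $\beta_D$ is the Bayes error (the minimum misclassification probability over measurable classifiers). *)

theory Defs
  imports "HOL-Probability.Probability"
begin

definition jointD :: "'a::euclidean_space set \<Rightarrow> 'c set \<Rightarrow> ('a \<Rightarrow> 'c \<Rightarrow> real) \<Rightarrow> ('a \<times> 'c) measure" where
  "jointD X Ys p = density (restrict_space lborel X \<Otimes>\<^sub>M count_space Ys) (\<lambda>(x, k). ennreal (p x k))"

definition marginal :: "'c set \<Rightarrow> ('a \<Rightarrow> 'c \<Rightarrow> real) \<Rightarrow> 'a \<Rightarrow> real" where
  "marginal Ys p x = (\<Sum>k\<in>Ys. p x k)"

definition posterior :: "'c set \<Rightarrow> ('a \<Rightarrow> 'c \<Rightarrow> real) \<Rightarrow> 'c \<Rightarrow> 'a \<Rightarrow> real" where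
  "posterior Ys p k x = p x k / marginal Ys p x"

definition Rob :: "'a set \<Rightarrow> 'c set \<Rightarrow> ('a \<Rightarrow> 'c \<Rightarrow> real) \<Rightarrow> ('a \<Rightarrow> 'a \<Rightarrow> real) \<Rightarrow> real
    \<Rightarrow> ('a \<Rightarrow> 'c) \<Rightarrow> 'a \<Rightarrow> 'c \<Rightarrow> bool" where
  "Rob X Ys p d \<epsilon> h x y \<longleftrightarrow>
     (\<forall>x'\<in>X. d x x' \<le> \<epsilon> \<longrightarrow> h x' = y) \<and>
     (\<forall>x'\<in>X. \<forall>y'\<in>Ys. p x' y' > 0 \<and> d x x' \<le> \<epsilon> \<longrightarrow> h x' = y')"

definition irreducible_rob_error :: "'a::euclidean_space set \<Rightarrow> 'c set \<Rightarrow> ('a \<Rightarrow> 'c \<Rightarrow> real)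
    \<Rightarrow> ('a \<Rightarrow> 'a \<Rightarrow> real) \<Rightarrow> real \<Rightarrow> ennreal" where
  "irreducible_rob_error X Ys p d \<epsilon> =
     (INF h \<in> restrict_space lborel X \<rightarrow>\<^sub>M count_space Ys.
        \<integral>\<^sup>+ z. ennreal (1 - (if Rob X Ys p d \<epsilon> h (fst z) (snd z) then 1 else 0)) \<partial>jointD X Ys p)"

definition bayes_error :: "'a::euclidean_space set \<Rightarrow> 'c set \<Rightarrow> ('a \<Rightarrow> 'c \<Rightarrow> real) \<Rightarrow> real" where
  "bayes_error X Ys p =
     (\<integral>x\<in>X. (1 - Max ((\<lambda>k. posterior Ys p k x) ` Ys)) * marginal Ys p x \<partial>lborel)"

end

theory Submission
  imports Defs
begin

lemma pointwise_facts:
  fixes Ys :: "'c set" and q :: "'c \<Rightarrow> real"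
  assumes fin: "finite Ys" and ne: "Ys \<noteq> {}" and nn: "\<And>k. k \<in> Ys \<Longrightarrow> q k \<ge> 0"
  shows "Max (q ` Ys) \<le> sum q Ys" "sum q Ys \<le> real (card Ys) * Max (q ` Ys)"
    "0 \<le> Max (q ` Ys)"
proof -
  obtain k where k: "k \<in> Ys" "Max (q ` Ys) = q k"
    using fin ne by (metis (no_types, lifting) Max_in finite_imageI image_iff image_is_empty)
  have "q k \<le> sum q Ys" by (rule member_le_sum) (use k nn fin in auto)
  then show "Max (q ` Ys) \<le> sum q Ys" using k by simp
  show "0 \<le> Max (q ` Ys)" using k nn by simp
  have "sum q Ys \<le> sum (\<lambda>_. Max (q ` Ys)) Ys"
    by (rule sum_mono) (simp add: fin)
  then show "sum q Ys \<le> real (card Ys) * Max (q ` Ys)" by simp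
qed

theorem corollary1:
  fixes X :: "'a::euclidean_space set" and Ys :: "'c set"
    and p :: "'a \<Rightarrow> 'c \<Rightarrow> real" and d :: "'a \<Rightarrow> 'a \<Rightarrow> real" and \<epsilon> :: real
  assumes "X \<in> sets lborel"
    and "finite Ys" and "card Ys \<ge> 2"
    and "\<And>x k. x \<in> X \<Longrightarrow> k \<in> Ys \<Longrightarrow> p x k \<ge> 0"
    and "\<And>k. k \<in> Ys \<Longrightarrow> (\<lambda>x. p x k) \<in> borel_measurable lborel"
    and "prob_space (jointD X Ys p)"
    and "Metric_space X d"
    and "\<epsilon> > 0"
  shows "ennreal (real (card Ys) / (real (card Ys) - 1) * bayes_error X Ys p)
           \<le> irreducible_rob_error X Ys p d \<epsilon>"
proof -
  note Xs = assms(1) and fin = assms(2) and nn = assms(4) and pm = assms(5)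
  have ne: "Ys \<noteq> {}" using assms(3) by auto
  define K where "K = real (card Ys)"
  define c where "c = K / (K - 1)"
  have K2: "K \<ge> 2" using assms(3) unfolding K_def by simp
  have c0: "c > 0" unfolding c_def using K2 by simp
  define m where "m x = marginal Ys p x" for x
  define Mx where "Mx x = Max ((\<lambda>k. p x k) ` Ys)" for x
  define gr where "gr x = (if m x > 0 then c * (m x - Mx x) / m x else 0)" for x
  define h0 where "h0 x = (if m x > 0 then m x - Mx x else 0)" for x
  have F1: "Mx x \<le> m x" "m x \<le> K * Mx x" "0 \<le> Mx x" if "x \<in> X" for x
    using pointwise_facts[OF fin ne, of "\<lambda>k. p x k"] nn[OF that]
    unfolding m_def Mx_def marginal_def K_def by auto
  have gr0: "gr x \<ge> 0" if "x \<in> X" for x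
    using F1[OF that] c0 unfolding gr_def by auto
  have mgr: "m x * gr x = c * h0 x" for x
    unfolding gr_def h0_def by auto
  have bay: "(1 - Max ((\<lambda>k. posterior Ys p k x) ` Ys)) * marginal Ys p x = h0 x" if xX: "x \<in> X" for x
  proof (cases "m x > 0")
    case True
    have "(\<lambda>k. posterior Ys p k x) ` Ys = (\<lambda>t. t / m x) ` ((\<lambda>k. p x k) ` Ys)"
      unfolding posterior_def m_def by (simp add: image_image)
    also have "Max \<dots> = Mx x / m x"
      unfolding Mx_def
      by (rule mono_Max_commute[symmetric]) (auto simp: mono_def divide_right_mono True less_imp_le fin ne)
    finally show ?thesis using True unfolding h0_def m_def by (simp add: field_simps)
  next
    case False
    then have "m x = 0" using F1[OF xX] by linarith
    then show ?thesis unfolding h0_def m_def by auto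
  qed
  have h00: "h0 x \<ge> 0" if "x \<in> X" for x
    using F1[OF that] unfolding h0_def by auto
  have mm[measurable]: "m \<in> borel_measurable lborel"
    unfolding m_def[abs_def] marginal_def by (rule borel_measurable_sum) (use pm in auto)
  have Mxm[measurable]: "Mx \<in> borel_measurable lborel"
    unfolding Mx_def[abs_def] by (rule borel_measurable_Max) (use pm fin in auto)
  have grm[measurable]: "gr \<in> borel_measurable lborel"
    unfolding gr_def[abs_def] by measurable
  have h0m[measurable]: "h0 \<in> borel_measurable lborel"
    unfolding h0_def[abs_def] by measurable
  let ?R = "restrict_space lborel X"
  let ?P = "?R \<Otimes>\<^sub>M count_space Ys"
  have sfR: "sigma_finite_measure ?R"
    by (rule sigma_finite_measure_restrict_space[OF sigma_finite_lborel Xs])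
  interpret C: sigma_finite_measure "count_space Ys"
    by (rule sigma_finite_measure_count_space_finite[OF fin])
  have pP[measurable]: "(\<lambda>z. p (fst z) (snd z)) \<in> borel_measurable ?P"
  proof (rule measurable_compose_countable'[where f="\<lambda>i z. p (fst z) i" and g=snd and I=Ys])
    fix i assume "i \<in> Ys"
    then have "(\<lambda>x. p x i) \<in> borel_measurable ?R"
      using pm measurable_restrict_space1 by blast
    then show "(\<lambda>z. p (fst z) i) \<in> borel_measurable ?P"
      by (rule measurable_compose[OF measurable_fst])
  next
    show "snd \<in> ?P \<rightarrow>\<^sub>M count_space Ys" by (rule measurable_snd)
  next
    show "countable Ys" using fin by (rule countable_finite)
  qed
  have grR: "gr \<in> borel_measurable ?R"
    using grm measurable_restrict_space1 by blast
  have grP: "(\<lambda>z. gr (fst z)) \<in> borel_measurable ?P"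
    by (rule measurable_compose[OF measurable_fst grR])
  have spJ: "space (jointD X Ys p) = X \<times> Ys"
    unfolding jointD_def by (simp add: space_pair_measure space_restrict_space)
  have key: "ennreal (gr x) \<le> ennreal (1 - (if Rob X Ys p d \<epsilon> h x k then 1 else 0))"
    if xX: "x \<in> X" and kY: "k \<in> Ys" for h x k
  proof (cases "Rob X Ys p d \<epsilon> h x k")
    case True
    have dxx: "d x x \<le> \<epsilon>"
      using Metric_space.zero[OF assms(7) xX xX] assms(8) by simp
    have z: "p x k' = 0" if "k' \<in> Ys" "k' \<noteq> k" for k'
    proof (rule ccontr)
      assume "p x k' \<noteq> 0"
      then have "p x k' > 0" using nn[OF xX that(1)] by simp
      then have "h x = k'" "h x = k" using True xX that(1) dxx unfolding Rob_def by blast+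
      then show False using that(2) by simp
    qed
    have "m x = p x k + sum (p x) (Ys - {k})"
      unfolding m_def marginal_def using fin kY by (simp add: sum.remove)
    also have "sum (p x) (Ys - {k}) = 0" using z by (intro sum.neutral) auto
    finally have mx: "m x = p x k" by simp
    have "p x k \<le> Mx x" unfolding Mx_def using fin kY by (intro Max_ge) auto
    then have "Mx x = m x" using F1(1)[OF xX] mx by linarith
    then have "gr x = 0" unfolding gr_def by simp
    then show ?thesis by simp
  next
    case False
    have "gr x \<le> 1"
    proof (cases "m x > 0")
      case True
      have "K * (m x - Mx x) \<le> (K - 1) * m x" using F1(2)[OF xX] by (simp add: algebra_simps)
      then have "c * (m x - Mx x) \<le> m x" unfolding c_def using K2
        by (simp add: field_simps)
      then show ?thesis unfolding gr_def using True by simp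
    qed (simp add: gr_def)
    then show ?thesis using False by simp
  qed
  show ?thesis
    unfolding irreducible_rob_error_def
  proof (rule INF_greatest)
    fix h :: "'a \<Rightarrow> 'c"
    define F where "F x = indicator X x * (c * h0 x)" for x
    have F0: "F x \<ge> 0" for x unfolding F_def using h00 c0 by (simp add: indicator_def)
    have Fm: "F \<in> borel_measurable lborel" unfolding F_def using Xs by measurable
    have "bayes_error X Ys p = (\<integral>x. indicator X x * h0 x \<partial>lborel)"
      unfolding bayes_error_def set_lebesgue_integral_def by (rule Bochner_Integration.integral_cong) (auto simp: bay indicator_def)
    then have "c * bayes_error X Ys p = integral\<^sup>L lborel F"
      unfolding F_def by (simp add: mult.left_commute)
    then have "ennreal (real (card Ys) / (real (card Ys) - 1) * bayes_error X Ys p) = ennreal (integral\<^sup>L lborel F)"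
      unfolding c_def K_def by simp
    also have "\<dots> \<le> (\<integral>\<^sup>+ x. ennreal (F x) \<partial>lborel)"
    proof (cases "integrable lborel F")
      case True
      then show ?thesis using F0 by (simp add: nn_integral_eq_integral)
    next
      case False
      then show ?thesis by (simp add: not_integrable_integral_eq)
    qed
    also have "\<dots> = (\<integral>\<^sup>+ x. ennreal (m x * gr x) * indicator X x \<partial>lborel)"
      by (rule nn_integral_cong) (auto simp: F_def mgr indicator_def)
    also have "\<dots> = (\<integral>\<^sup>+ x. ennreal (m x * gr x) \<partial>?R)"
      by (rule nn_integral_restrict_space[symmetric]) (use Xs in simp)
    also have "\<dots> = (\<integral>\<^sup>+ x. \<integral>\<^sup>+ k. ennreal (p x k) * ennreal (gr x) \<partial>count_space Ys \<partial>?R)"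
    proof (rule nn_integral_cong)
      fix x assume "x \<in> space ?R"
      then have xX: "x \<in> X" by (simp add: space_restrict_space)
      have "m x * gr x = (\<Sum>k\<in>Ys. p x k * gr x)"
        unfolding m_def marginal_def by (simp add: sum_distrib_right)
      then have "ennreal (m x * gr x) = (\<Sum>k\<in>Ys. ennreal (p x k * gr x))"
        using nn[OF xX] gr0[OF xX] by simp
      also have "\<dots> = (\<Sum>k\<in>Ys. ennreal (p x k) * ennreal (gr x))"
        using nn[OF xX] gr0[OF xX] by (simp add: ennreal_mult)
      finally show "ennreal (m x * gr x) = (\<integral>\<^sup>+ k. ennreal (p x k) * ennreal (gr x) \<partial>count_space Ys)"
        using fin by (simp add: nn_integral_count_space_finite)
    qed
    also have "\<dots> = (\<integral>\<^sup>+ z. ennreal (p (fst z) (snd z)) * ennreal (gr (fst z)) \<partial>?P)"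
      using C.nn_integral_fst[of "\<lambda>z. ennreal (p (fst z) (snd z)) * ennreal (gr (fst z))" ?R]
      using pP grP by simp
    also have "\<dots> = (\<integral>\<^sup>+ z. ennreal (gr (fst z)) \<partial>jointD X Ys p)"
      unfolding jointD_def
      by (subst nn_integral_density) (use pP grP in \<open>auto simp: case_prod_beta\<close>)
    also have "\<dots> \<le> (\<integral>\<^sup>+ z. ennreal (1 - (if Rob X Ys p d \<epsilon> h (fst z) (snd z) then 1 else 0)) \<partial>jointD X Ys p)"
      by (rule nn_integral_mono) (metis spJ key mem_Times_iff)
    finally show "ennreal (real (card Ys) / (real (card Ys) - 1) * bayes_error X Ys p)
      \<le> (\<integral>\<^sup>+ z. ennreal (1 - (if Rob X Ys p d \<epsilon> h (fst z) (snd z) then 1 else 0)) \<partial>jointD X Ys p)" .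
  qed
qed

end
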